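(* Let $s\in(0,1)$ and let $F\in\mathcal M_s$ be an even function. Suppose that for some $\gamma>0$ one has $\int_\gamma F(x)x^{2k}=0$ for all $k\in\mathbb Z_{\ge0}$. Then $F=0$.
   Context: Fix $q\in(0,1)$. Notation: $(a;q)_\infty=\prod_{j\ge0}(1-aq^j)$, $e_q(x)=1/(x;q)_\infty$. For $\gamma>0$, $\int_\gamma f=(1-q)\sum_{k\in\mathbb Z}\sum_{\epsilon=\pm1}q^k\gamma f(\epsilon q^k\gamma)$ whenever absolutely convergent. For $s>0$, $\mathcal M_s$ is the set of functions $F(x)=f(x)e_{q^2}(-x^2)$ (holomorphic on $|\mathrm{Im}\,x|<1$) where $f(x)=\sum_{l\ge0}a_lx^l$ with $|a_l|\le Cs^lq^{l^2/2}$ for all $l$, for some $C>0$. *)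

theory Defs
  imports "HOL-Analysis.Analysis"
begin

definition qpoch_inf :: "complex \<Rightarrow> real \<Rightarrow> complex" where
  "qpoch_inf a q = (\<Prod>j. 1 - a * of_real (q ^ j))"

definition e_q :: "real \<Rightarrow> complex \<Rightarrow> complex" where
  "e_q q x = 1 / qpoch_inf x q"

definition qint_term :: "real \<Rightarrow> real \<Rightarrow> (complex \<Rightarrow> complex) \<Rightarrow> int \<times> real \<Rightarrow> complex" where
  "qint_term q \<gamma> f = (\<lambda>(k, \<epsilon>). of_real (q powi k * \<gamma>) * f (of_real (\<epsilon> * q powi k * \<gamma>)))"

definition qint_exists :: "real \<Rightarrow> real \<Rightarrow> (complex \<Rightarrow> complex) \<Rightarrow> bool" where
  "qint_exists q \<gamma> f \<longleftrightarrow> (\<lambda>p. norm (qint_term q \<gamma> f p)) summable_on (UNIV \<times> {1, -1})"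

definition qint :: "real \<Rightarrow> real \<Rightarrow> (complex \<Rightarrow> complex) \<Rightarrow> complex" where
  "qint q \<gamma> f = of_real (1 - q) * (\<Sum>\<^sub>\<infinity>p\<in>UNIV \<times> {1, -1}. qint_term q \<gamma> f p)"

definition M_s :: "real \<Rightarrow> real \<Rightarrow> (complex \<Rightarrow> complex) set" where
  "M_s q s = {F. \<exists>(a :: nat \<Rightarrow> complex) C. C > 0 \<and>
      (\<forall>l. norm (a l) \<le> C * s ^ l * q powr (real l ^ 2 / 2)) \<and>
      (\<forall>x. \<bar>Im x\<bar> < 1 \<longrightarrow> F x = (\<Sum>l. a l * x ^ l) * e_q (q ^ 2) (- (x ^ 2)))}"

end

theory Submission
  imports Defs "HOL-Complex_Analysis.Complex_Analysis"
begin



lemma ev_bound: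
  fixes g :: "nat \<Rightarrow> real"
  assumes "\<forall>n\<ge>N. g n \<le> 1" "\<And>n. 0 \<le> g n"
  shows "\<exists>M. \<forall>n. g n \<le> M"
proof -
  have "g n \<le> 1 + (\<Sum>i<N. g i)" for n
  proof (cases "n < N")
    case True
    then have "g n \<le> (\<Sum>i<N. g i)"
      by (intro member_le_sum) (auto simp: assms(2))
    then show ?thesis by simp
  next
    case False
    then have "g n \<le> 1" using assms(1) by simp
    moreover have "0 \<le> (\<Sum>i<N. g i)" by (intro sum_nonneg) (simp add: assms(2))
    ultimately show ?thesis by simp
  qed
  then show ?thesis by blast
qed

lemma gauss_bound:
  fixes q \<rho> :: real
  assumes "0 < q" "q < 1" "0 \<le> \<rho>"
  shows "\<exists>M. \<forall>n::nat. \<rho> ^ n * q powr (real n ^ 2 / 2) \<le> M * (1/2) ^ n"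
proof -
  define g where "g n = (2*\<rho>) ^ n * q powr (real n ^ 2 / 2)" for n
  have lim: "(\<lambda>n. (2*\<rho>+1) * sqrt q ^ n) \<longlonglongrightarrow> 0"
    using assms by (intro tendsto_mult_right_zero LIMSEQ_power_zero) auto
  then have "eventually (\<lambda>n. (2*\<rho>+1) * sqrt q ^ n < 1) sequentially"
    by (rule order_tendstoD) simp
  then obtain N where N: "\<And>n. n \<ge> N \<Longrightarrow> (2*\<rho>+1) * sqrt q ^ n < 1"
    by (auto simp: eventually_sequentially)
  have geq: "q powr (real n ^ 2 / 2) = (sqrt q ^ n) ^ n" for n
  proof -
    have "(sqrt q ^ n) ^ n = sqrt q ^ (n*n)" by (simp add: power_mult)
    also have "\<dots> = (q powr (1/2)) powr (real (n*n))"
      using assms by (simp add: powr_realpow sqrt_def root_powr_inverse flip: of_nat_mult)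
    also have "\<dots> = q powr (real n ^ 2 / 2)"
      using assms by (simp add: powr_powr power2_eq_square)
    finally show ?thesis by simp
  qed
  have "\<forall>n\<ge>N. g n \<le> 1"
  proof (intro allI impI)
    fix n assume "n \<ge> N"
    have "g n = (2*\<rho> * sqrt q ^ n) ^ n" unfolding g_def geq by (simp add: power_mult_distrib)
    also have "\<dots> \<le> 1"
    proof (rule power_le_one)
      show "0 \<le> 2*\<rho> * sqrt q ^ n" using assms by simp
      have "2*\<rho> * sqrt q ^ n \<le> (2*\<rho>+1) * sqrt q ^ n"
        using assms by (intro mult_right_mono) auto
      then show "2*\<rho> * sqrt q ^ n \<le> 1" using N[OF \<open>n \<ge> N\<close>] by simp
    qed
    finally show "g n \<le> 1" .
  qed
  moreover have "\<And>n. 0 \<le> g n" using assms by (simp add: g_def)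
  ultimately obtain M where M: "\<And>n. g n \<le> M" using ev_bound by blast
  have "\<rho> ^ n * q powr (real n ^ 2 / 2) \<le> M * (1/2) ^ n" for n
  proof -
    have "\<rho> ^ n * q powr (real n ^ 2 / 2) = g n * (1/2)^n"
      by (simp add: g_def power_mult_distrib field_simps)
    also have "\<dots> \<le> M * (1/2)^n" using M[of n] by (intro mult_right_mono) auto
    finally show ?thesis .
  qed
  then show ?thesis by blast
qed



lemma geo_int:
  fixes lam :: real
  assumes "0 \<le> lam" "lam < 1"
  shows "(\<lambda>d::int. lam ^ nat \<bar>d\<bar>) summable_on UNIV"
proof -
  have U: "(UNIV::int set) = range int \<union> range (\<lambda>n. - int (Suc n))"
  proof -
    have "d \<in> range int \<union> range (\<lambda>n. - int (Suc n))" for d :: int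
    proof (cases "d \<ge> 0")
      case True then show ?thesis by (metis UnI1 nonneg_int_cases rangeI)
    next
      case False then have "d = - int (Suc (nat (-d - 1)))" by simp
      then show ?thesis by blast
    qed
    then show ?thesis by blast
  qed
  have g: "summable (\<lambda>n. lam ^ n)" using assms by simp
  have s1: "(\<lambda>d::int. lam ^ nat \<bar>d\<bar>) summable_on range int"
    by (subst summable_on_reindex) (use assms g in \<open>auto simp: o_def summable_on_UNIV_nonneg_real_iff\<close>)
  have g2: "summable (\<lambda>n. lam ^ Suc n)" using g by (simp add: summable_mult)
  have s2: "(\<lambda>d::int. lam ^ nat \<bar>d\<bar>) summable_on range (\<lambda>n. - int (Suc n))"
    by (subst summable_on_reindex) (use assms g2 in \<open>auto simp: o_def inj_def summable_on_UNIV_nonneg_real_iff nat_add_distrib\<close>)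
  show ?thesis unfolding U by (rule summable_on_Un_disjoint[OF s1 s2]) auto
qed


lemma summable_times_pm:
  fixes g :: "int \<Rightarrow> real"
  assumes "g summable_on UNIV" "\<And>d. 0 \<le> g d"
  shows "(\<lambda>(k::int, e::real). g k) summable_on (UNIV \<times> {1, -1})"
proof -
  have "(\<lambda>(k::int, e::real). g k) summable_on (Sigma UNIV (\<lambda>_. {1, -1}))"
  proof (rule summable_on_SigmaI[where g = "\<lambda>k. 2 * g k"])
    fix k :: int
    have "((\<lambda>e. g k) has_sum sum (\<lambda>e. g k) {1, -1::real}) {1, -1::real}" by (rule has_sum_finite) simp
    then show "((\<lambda>e. (\<lambda>(k::int, e::real). g k) (k, e)) has_sum 2 * g k) {1, -1::real}" by simp
  next
    show "(\<lambda>k. 2 * g k) summable_on UNIV" using assms(1) by (rule summable_on_cmult_right)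
  next
    fix x y show "0 \<le> (\<lambda>(k::int, e::real). g k) (x, y)" using assms(2) by simp
  qed
  then show ?thesis by simp
qed

lemma shift_le:
  fixes g :: "int \<Rightarrow> real" and K :: int
  assumes "g summable_on UNIV" "\<And>d. 0 \<le> g d"
  shows "summable (\<lambda>l. g (int l - K)) \<and> (\<Sum>l. g (int l - K)) \<le> infsum g UNIV"
proof -
  have inj: "inj (\<lambda>l::nat. int l - K)" by (auto simp: inj_def)
  have gr: "g summable_on range (\<lambda>l::nat. int l - K)"
    by (rule summable_on_subset_banach[OF assms(1)]) simp
  have s: "(\<lambda>l. g (int l - K)) summable_on UNIV"
    using gr unfolding summable_on_reindex[OF inj] by (simp add: o_def)
  have sm: "summable (\<lambda>l. g (int l - K))"
    using summable_on_UNIV_nonneg_real_iff[of "\<lambda>l. g (int l - K)"] assms(2) s by simp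
  have "(\<Sum>l. g (int l - K)) = infsum (\<lambda>l. g (int l - K)) UNIV"
    by (rule sums_unique[OF has_sum_imp_sums[OF has_sum_infsum[OF s]], symmetric])
  also have "\<dots> = infsum g (range (\<lambda>l::nat. int l - K))"
    using infsum_reindex[OF inj, of g] by (simp add: o_def)
  also have "\<dots> \<le> infsum g UNIV"
    by (rule infsum_mono_neutral[OF gr assms(1)]) (simp_all add: assms(2))
  finally show ?thesis using sm by simp
qed


lemma Pr_facts:
  fixes q r :: real
  assumes "0 < q" "q < 1"
  shows "convergent_prod (\<lambda>j. 1 + r^2*(q^2)^j)"
    and "(\<lambda>j. 1 + r^2*(q^2)^j) has_prod prodinf (\<lambda>j. 1 + r^2*(q^2)^j)"
    and "1 \<le> prodinf (\<lambda>j. 1 + r^2*(q^2)^j)"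
    and "(\<Prod>j<K. 1 + r^2*(q^2)^j) \<le> prodinf (\<lambda>j. 1 + r^2*(q^2)^j)"
proof -
  have q2: "0 \<le> q^2" "q^2 < 1" using assms by (auto simp: power_less_one_iff)
  have "summable (\<lambda>j. \<bar>r^2*(q^2)^j\<bar>)"
    using q2 by (simp add: abs_mult summable_mult)
  moreover have "r^2*(q^2)^j \<noteq> -1" for j
  proof -
    have "0 \<le> r^2*(q^2)^j" using q2 by simp
    then show ?thesis by linarith
  qed
  ultimately show cp: "convergent_prod (\<lambda>j. 1 + r^2*(q^2)^j)"
    by (rule summable_imp_convergent_prod_real)
  then show hp: "(\<lambda>j. 1 + r^2*(q^2)^j) has_prod prodinf (\<lambda>j. 1 + r^2*(q^2)^j)"
    by (rule convergent_prod_has_prod)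
  have ge: "1 \<le> 1 + r^2*(q^2)^j" for j using q2 by simp
  show "1 \<le> prodinf (\<lambda>j. 1 + r^2*(q^2)^j)"
    by (rule prodinf_nonneg[OF hp ge])
  show "(\<Prod>j<K. 1 + r^2*(q^2)^j) \<le> prodinf (\<lambda>j. 1 + r^2*(q^2)^j)"
    by (rule prod_le_prodinf[OF hp]) (use ge order_trans zero_le_one in blast)+
qed

lemma Eeq:
  fixes q r :: real
  assumes "0 < q" "q < 1"
  shows "e_q (q^2) (- ((complex_of_real r)^2)) = of_real (1 / prodinf (\<lambda>j. 1 + r^2*(q^2)^j))"
proof -
  have hp: "(\<lambda>j. 1 + r^2*(q^2)^j) has_prod prodinf (\<lambda>j. 1 + r^2*(q^2)^j)"
    using Pr_facts(2)[OF assms] .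
  then have "(\<lambda>j. complex_of_real (1 + r^2*(q^2)^j)) has_prod of_real (prodinf (\<lambda>j. 1 + r^2*(q^2)^j))"
    by (simp only: has_prod_of_real_iff)
  moreover have "(\<lambda>j. complex_of_real (1 + r^2*(q^2)^j)) = (\<lambda>j. 1 - (- ((complex_of_real r)^2)) * of_real ((q^2)^j))"
    by (simp add: fun_eq_iff)
  ultimately have "qpoch_inf (- ((complex_of_real r)^2)) (q^2) = of_real (prodinf (\<lambda>j. 1 + r^2*(q^2)^j))"
    unfolding qpoch_inf_def by (metis has_prod_unique)
  then show ?thesis unfolding e_q_def by simp
qed

lemma prod_low:
  fixes q r :: real
  shows "(\<Prod>j<K. r^2*(q^2)^j) * q^K = r^(2*K) * q^(K^2)"
proof (induction K)
  case 0 then show ?case by simp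
next
  case (Suc K)
  have e1: "(q^2)^K = q^K * q^K" by (simp add: power_mult[symmetric] mult_2 power_add)
  have e2: "q^((Suc K)^2) = q^(K^2) * q^K * q^K * q"
    by (simp add: power2_eq_square power_add[symmetric] algebra_simps)
  have e3: "r^(2*Suc K) = r^(2*K) * r^2" by (simp add: power_add[symmetric] power2_eq_square)
  have "(\<Prod>j<Suc K. r^2*(q^2)^j) * q^Suc K = ((\<Prod>j<K. r^2*(q^2)^j) * q^K) * (r^2 * (q^2)^K * q)"
    by (simp add: algebra_simps)
  also have "\<dots> = r^(2*K) * q^(K^2) * (r^2 * (q^K * q^K) * q)" using Suc e1 by simp
  also have "\<dots> = r^(2*Suc K) * q^((Suc K)^2)"
    unfolding e2 e3 by (simp add: algebra_simps)
  finally show ?case .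
qed

lemma Er_bound:
  fixes q \<gamma> :: real and K :: nat
  assumes "0 < q" "q < 1" "0 < \<gamma>"
  shows "1 / prodinf (\<lambda>j. 1 + (\<gamma>/q^K)^2*(q^2)^j) \<le> q^(K^2) * q^K / \<gamma>^(2*K)"
proof -
  define r where "r = \<gamma>/q^K"
  have "(\<Prod>j<K. r^2*(q^2)^j) \<le> (\<Prod>j<K. 1 + r^2*(q^2)^j)"
    by (intro prod_mono) (use assms in auto)
  also have "\<dots> \<le> prodinf (\<lambda>j. 1 + r^2*(q^2)^j)" by (rule Pr_facts(4)[OF assms(1,2)])
  finally have le: "(\<Prod>j<K. r^2*(q^2)^j) \<le> prodinf (\<lambda>j. 1 + r^2*(q^2)^j)" .
  have "(\<Prod>j<K. r^2*(q^2)^j) = r^(2*K) * q^(K^2) / q^K"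
    using prod_low[of r q K] assms by (simp add: field_simps)
  also have "\<dots> = \<gamma>^(2*K) / (q^(K^2) * q^K)"
  proof -
    have a: "(q^K)^(2*K) = q^(K^2) * q^(K^2)"
    proof -
      have "(q^K)^(2*K) = q^(K*(2*K))" by (simp add: power_mult)
      also have "\<dots> = q^(K^2 + K^2)"
      proof -
        have "K*(2*K) = K^2 + K^2" by (simp add: power2_eq_square)
        then show ?thesis by (simp only:)
      qed
      finally show ?thesis by (simp add: power_add)
    qed
    have "r^(2*K) = \<gamma>^(2*K) / (q^(K^2) * q^(K^2))" unfolding a[symmetric] by (simp add: r_def power_divide)
    then show ?thesis using assms by (simp add: field_simps)
  qed
  finally have eq: "(\<Prod>j<K. r^2*(q^2)^j) = \<gamma>^(2*K) / (q^(K^2) * q^K)" .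
  have pos: "0 < \<gamma>^(2*K) / (q^(K^2) * q^K)" using assms by simp
  have "1 / prodinf (\<lambda>j. 1 + r^2*(q^2)^j) \<le> 1 / (\<gamma>^(2*K) / (q^(K^2) * q^K))"
  proof (rule divide_left_mono)
    show "\<gamma>^(2*K) / (q^(K^2) * q^K) \<le> prodinf (\<lambda>j. 1 + r^2*(q^2)^j)" using le eq by simp
    have "0 < prodinf (\<lambda>j. 1 + r^2*(q^2)^j)" using le eq pos by linarith
    then show "0 < prodinf (\<lambda>j. 1 + r^2*(q^2)^j) * (\<gamma>^(2*K) / (q^(K^2) * q^K))" using pos by (rule mult_pos_pos)
  qed simp
  also have "\<dots> = q^(K^2) * q^K / \<gamma>^(2*K)" by simp
  finally show ?thesis unfolding r_def .
qed



lemma theta_bound: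
  fixes q \<beta> :: real
  assumes "0 < q" "q < 1" "0 < \<beta>"
  shows "\<exists>M. \<forall>d::int. \<beta> powi d * q powr (real_of_int d ^ 2 / 2) \<le> M * (1/2) ^ nat \<bar>d\<bar>"
proof -
  define \<rho> where "\<rho> = max \<beta> (1/\<beta>)"
  have rp: "0 \<le> \<rho>" using assms by (simp add: \<rho>_def)
  obtain M where M: "\<And>n::nat. \<rho> ^ n * q powr (real n ^ 2 / 2) \<le> M * (1/2) ^ n"
    using gauss_bound[OF assms(1,2) rp] by blast
  have "\<beta> powi d * q powr (real_of_int d ^ 2 / 2) \<le> M * (1/2) ^ nat \<bar>d\<bar>" for d :: int
  proof -
    have b: "\<beta> powi d \<le> \<rho> ^ nat \<bar>d\<bar>"
    proof (cases "d \<ge> 0")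
      case True
      then have "\<beta> powi d = \<beta> ^ nat \<bar>d\<bar>" by (simp add: power_int_def)
      also have "\<dots> \<le> \<rho> ^ nat \<bar>d\<bar>" using assms by (intro power_mono) (auto simp: \<rho>_def)
      finally show ?thesis .
    next
      case False
      then have "\<beta> powi d = (1/\<beta>) ^ nat \<bar>d\<bar>" by (simp add: power_int_def power_inverse inverse_eq_divide)
      also have "\<dots> \<le> \<rho> ^ nat \<bar>d\<bar>" using assms by (intro power_mono) (auto simp: \<rho>_def)
      finally show ?thesis .
    qed
    have e: "real_of_int d ^ 2 = real (nat \<bar>d\<bar>) ^ 2" by simp
    have "\<beta> powi d * q powr (real_of_int d ^ 2 / 2) \<le> \<rho> ^ nat \<bar>d\<bar> * q powr (real (nat \<bar>d\<bar>) ^ 2 / 2)"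
      unfolding e using b by (intro mult_right_mono) auto
    also have "\<dots> \<le> M * (1/2) ^ nat \<bar>d\<bar>" by (rule M)
    finally show ?thesis .
  qed
  then show ?thesis by blast
qed

lemma term_ident:
  fixes q s \<gamma> :: real and K l :: nat
  assumes "0 < q" "0 < s" "0 < \<gamma>"
  shows "s^l * q powr (real l ^ 2 / 2) * (\<gamma>/q^K)^l
       = (s*\<gamma>)^K / q powr (real K ^ 2 / 2) * ((s*\<gamma>) powi (int l - int K) * q powr (real_of_int (int l - int K) ^ 2 / 2))"
proof -
  have b: "(s*\<gamma>)^K * (s*\<gamma>) powi (int l - int K) = (s*\<gamma>)^l"
  proof -
    have "(s*\<gamma>) powi (int K + (int l - int K)) = (s*\<gamma>) powi int K * (s*\<gamma>) powi (int l - int K)"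
      by (rule power_int_add) (use assms in simp)
    then show ?thesis by simp
  qed
  have qK: "q^(K*l) = q powr (real K * real l)"
    using assms by (simp add: powr_realpow flip: of_nat_mult)
  have ex: "(real l - real K) ^ 2 / 2 - real K ^ 2 / 2 = real l ^ 2 / 2 - real K * real l"
    by (simp add: power2_eq_square field_simps)
  have qq: "q powr (real_of_int (int l - int K) ^ 2 / 2) / q powr (real K ^ 2 / 2) = q powr (real l ^ 2 / 2) / q^(K*l)"
    unfolding qK using assms by (simp add: powr_diff[symmetric] ex)
  have "s^l * q powr (real l ^ 2 / 2) * (\<gamma>/q^K)^l = (s*\<gamma>)^l * (q powr (real l ^ 2 / 2) / q^(K*l))"
    using assms by (simp add: power_divide power_mult_distrib power_mult field_simps)
  also have "\<dots> = (s*\<gamma>)^K * (s*\<gamma>) powi (int l - int K) * (q powr (real_of_int (int l - int K) ^ 2 / 2) / q powr (real K ^ 2 / 2))"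
    unfolding b qq ..
  finally show ?thesis by (simp add: field_simps)
qed



lemma G_neg:
  fixes q s \<gamma> C M :: real and na :: "nat \<Rightarrow> real" and K :: nat
  assumes "0 < q" "q < 1" "0 < s" "0 < \<gamma>" "0 \<le> C"
    and na0: "\<And>l. 0 \<le> na l" and nab: "\<And>l. na l \<le> C * s^l * q powr (real l ^ 2 / 2)"
    and th: "\<And>d::int. (s*\<gamma>) powi d * q powr (real_of_int d ^ 2 / 2) \<le> M * (1/2) ^ nat \<bar>d\<bar>"
  shows "summable (\<lambda>l. na l * (\<gamma>/q^K)^l) \<and>
         (\<Sum>l. na l * (\<gamma>/q^K)^l) \<le> C * (s*\<gamma>)^K / q powr (real K ^ 2 / 2) * M * infsum (\<lambda>d::int. (1/2::real) ^ nat \<bar>d\<bar>) UNIV"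
proof -
  define A where "A = C * (s*\<gamma>)^K / q powr (real K ^ 2 / 2)"
  define W where "W = infsum (\<lambda>d::int. (1/2::real) ^ nat \<bar>d\<bar>) UNIV"
  have A0: "0 \<le> A" using assms by (simp add: A_def)
  have M0: "0 \<le> M" using th[of 0] assms by simp
  have gs: "(\<lambda>d::int. (1/2::real) ^ nat \<bar>d\<bar>) summable_on UNIV" by (rule geo_int) auto
  obtain sh: "summable (\<lambda>l. (1/2::real) ^ nat \<bar>int l - int K\<bar>)"
    and shle: "(\<Sum>l. (1/2::real) ^ nat \<bar>int l - int K\<bar>) \<le> W"
    using shift_le[OF gs, of "int K"] by (auto simp: W_def)
  have bd: "na l * (\<gamma>/q^K)^l \<le> A * M * (1/2) ^ nat \<bar>int l - int K\<bar>" for l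
  proof -
    have "na l * (\<gamma>/q^K)^l \<le> C * s^l * q powr (real l ^ 2 / 2) * (\<gamma>/q^K)^l"
      using assms by (intro mult_right_mono nab) auto
    also have "\<dots> = C * (s^l * q powr (real l ^ 2 / 2) * (\<gamma>/q^K)^l)" by simp
    also have "\<dots> = A * ((s*\<gamma>) powi (int l - int K) * q powr (real_of_int (int l - int K) ^ 2 / 2))"
      unfolding term_ident[OF assms(1,3,4)] by (simp add: A_def)
    also have "\<dots> \<le> A * (M * (1/2) ^ nat \<bar>int l - int K\<bar>)"
      by (intro mult_left_mono th A0)
    finally show ?thesis by simp
  qed
  have s2: "summable (\<lambda>l. A * M * (1/2::real) ^ nat \<bar>int l - int K\<bar>)"
    using sh by (rule summable_mult)
  have s1: "summable (\<lambda>l. na l * (\<gamma>/q^K)^l)"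
  proof (rule summable_comparison_test'[OF s2])
    fix l :: nat assume "l \<ge> 0"
    have "0 \<le> na l * (\<gamma>/q^K)^l" using assms na0 by simp
    then show "norm (na l * (\<gamma>/q^K)^l) \<le> A * M * (1/2) ^ nat \<bar>int l - int K\<bar>" using bd[of l] by simp
  qed
  have "(\<Sum>l. na l * (\<gamma>/q^K)^l) \<le> (\<Sum>l. A * M * (1/2::real) ^ nat \<bar>int l - int K\<bar>)"
    by (rule suminf_le[OF bd s1 s2])
  also have "\<dots> = A * M * (\<Sum>l. (1/2::real) ^ nat \<bar>int l - int K\<bar>)"
    using sh by (rule suminf_mult)
  also have "\<dots> \<le> A * M * W" using shle A0 M0 by (intro mult_left_mono) auto
  finally show ?thesis using s1 by (simp add: A_def W_def)
qed

lemma G_mono: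
  fixes na :: "nat \<Rightarrow> real"
  assumes "\<And>l. 0 \<le> na l" "summable (\<lambda>l. na l * R^l)" "0 \<le> r" "r \<le> R"
  shows "summable (\<lambda>l. na l * r^l) \<and> (\<Sum>l. na l * r^l) \<le> (\<Sum>l. na l * R^l)"
proof -
  have le: "na l * r^l \<le> na l * R^l" for l
    using assms by (intro mult_left_mono power_mono) auto
  have s: "summable (\<lambda>l. na l * r^l)"
    by (rule summable_comparison_test'[OF assms(2)]) (use le assms in auto)
  show ?thesis using s suminf_le[OF le s assms(2)] by simp
qed

lemma final_num:
  fixes q s \<gamma> X E B :: real and K :: nat
  assumes "0 < q" "0 < s" "0 < \<gamma>" "0 \<le> X" "X \<le> B * (s*\<gamma>)^K / q powr (real K ^ 2 / 2)"
    and "0 \<le> E" "E \<le> q^(K^2) * q^K / \<gamma>^(2*K)"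
  shows "(\<gamma>/q^K) * X^2 * E \<le> \<gamma> * B^2 * (s^2)^K"
proof -
  have qp: "(q powr (real K ^ 2 / 2))^2 = q^(K^2)"
    using assms by (simp add: powr_realpow[symmetric] powr_powr flip: powr_power)
  have "(\<gamma>/q^K) * X^2 * E \<le> (\<gamma>/q^K) * (B * (s*\<gamma>)^K / q powr (real K ^ 2 / 2))^2 * (q^(K^2) * q^K / \<gamma>^(2*K))"
    using assms by (intro mult_mono power_mono) auto
  also have "\<dots> = \<gamma> * B^2 * (s^K)^2"
    using assms by (simp add: power_divide qp power_mult_distrib power_mult field_simps)
  also have "(s^K)^2 = (s^2)^K" by (simp add: power_mult[symmetric] mult.commute)
  finally show ?thesis .
qed


theorem lemma5p9:
  fixes q s \<gamma> :: real and F :: "complex \<Rightarrow> complex"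
  assumes "0 < q" "q < 1"
    and "0 < s" "s < 1"
    and "F \<in> M_s q s"
    and "\<forall>x. \<bar>Im x\<bar> < 1 \<longrightarrow> F (- x) = F x"
    and "\<gamma> > 0"
    and "\<forall>k::nat. qint_exists q \<gamma> (\<lambda>x. F x * x ^ (2 * k)) \<and>
                   qint q \<gamma> (\<lambda>x. F x * x ^ (2 * k)) = 0"
  shows "\<forall>x. \<bar>Im x\<bar> < 1 \<longrightarrow> F x = 0"
proof -
  note q0 = assms(1) and q1 = assms(2) and s0 = assms(3) and s1 = assms(4) and g0 = assms(7)
  obtain a C where Cpos: "C > 0" and ab: "\<And>l. norm (a l) \<le> C * s ^ l * q powr (real l ^ 2 / 2)"
    and Frep: "\<And>x. \<bar>Im x\<bar> < 1 \<Longrightarrow> F x = (\<Sum>l. a l * x ^ l) * e_q (q ^ 2) (- (x ^ 2))"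
    using assms(5) unfolding M_s_def by blast
  define f where "f x = (\<Sum>l. a l * x ^ l)" for x
  define Er where "Er r = 1 / prodinf (\<lambda>j. 1 + r^2*(q^2)^j)" for r :: real
  define G where "G r = (\<Sum>l. norm (a l) * r ^ l)" for r :: real
  have Gsum: "summable (\<lambda>l. norm (a l) * r ^ l)" if r0: "0 \<le> r" for r
  proof -
    obtain M where M: "\<And>n::nat. (s*r) ^ n * q powr (real n ^ 2 / 2) \<le> M * (1/2) ^ n"
      using gauss_bound[OF q0 q1, of "s*r"] s0 r0 by auto
    have "summable (\<lambda>l. C * M * (1/2::real)^l)" by (intro summable_mult) simp
    then show ?thesis
    proof (rule summable_comparison_test')
      fix l :: nat assume "l \<ge> 0"
      have "norm (norm (a l) * r^l) = norm (a l) * r^l" using r0 by simp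
      also have "\<dots> \<le> C * s^l * q powr (real l^2/2) * r^l" using ab r0 by (intro mult_right_mono) auto
      also have "\<dots> = C * ((s*r)^l * q powr (real l ^ 2 / 2))" by (simp add: power_mult_distrib)
      also have "\<dots> \<le> C * (M * (1/2)^l)" using M Cpos by (intro mult_left_mono) auto
      finally show "norm (norm (a l) * r^l) \<le> C * M * (1/2)^l" by simp
    qed
  qed
  have fsum: "summable (\<lambda>l. norm (a l * x ^ l))" for x
    using Gsum[of "norm x"] by (simp add: norm_mult norm_power)
  have fnorm: "norm (f x) \<le> G (norm x)" for x
    unfolding f_def G_def using summable_norm[OF fsum[of x]] by (simp add: norm_mult norm_power)
  have G0: "0 \<le> G r" if "0 \<le> r" for r
    unfolding G_def using Gsum[OF that] that by (intro suminf_nonneg) auto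
  have Er_pos: "0 < Er r" and Er_le1: "Er r \<le> 1" for r
    using Pr_facts(3)[OF q0 q1, of r] by (auto simp: Er_def)
  have Er_minus: "Er (-r) = Er r" for r by (simp add: Er_def)
  have Feq: "F (of_real r) = f (of_real r) * of_real (Er r)" for r
    using Frep[of "of_real r"] Eeq[OF q0 q1, of r] by (simp add: f_def Er_def)
  have feven: "f (of_real (-r)) = f (of_real r)" for r
  proof -
    have "F (of_real (-r)) = F (of_real r)" using assms(6) by (metis Im_complex_of_real abs_zero of_real_minus zero_less_one)
    then have "f (of_real (-r)) * of_real (Er r) = f (of_real r) * of_real (Er r)"
      using Feq[of r] Feq[of "-r"] Er_minus[of r] by auto
    then show ?thesis using Er_pos[of r] by simp
  qed
  define lam where "lam = max q (s^2)"
  have lam0: "0 \<le> lam" and lam1: "lam < 1" using q0 q1 s0 s1 by (auto simp: lam_def power_less_one_iff)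
  obtain M where th: "\<And>d::int. (s*\<gamma>) powi d * q powr (real_of_int d ^ 2 / 2) \<le> M * (1/2) ^ nat \<bar>d\<bar>"
    using theta_bound[OF q0 q1, of "s*\<gamma>"] s0 g0 by auto
  define W where "W = infsum (\<lambda>d::int. (1/2::real) ^ nat \<bar>d\<bar>) UNIV"
  define D where "D = \<gamma> * max ((G \<gamma>)^2) ((C*M*W)^2)"
  have D0: "0 \<le> D" unfolding D_def using g0 by (intro mult_nonneg_nonneg) (auto simp: le_max_iff_disj)
  have kb: "q powi k * \<gamma> * (G (q powi k * \<gamma>))^2 * Er (q powi k * \<gamma>) \<le> D * lam ^ nat \<bar>k\<bar>" for k :: int
  proof (cases "k \<ge> 0")
    case True
    define K where "K = nat k"
    have qk: "q powi k = q^K" using True by (simp add: K_def power_int_def)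
    have r1: "q^K * \<gamma> \<le> \<gamma>" using q0 q1 g0 by (simp add: power_le_one mult_left_le_one_le)
    have r0: "0 \<le> q^K * \<gamma>" using q0 g0 by simp
    have Gle: "G (q^K * \<gamma>) \<le> G \<gamma>"
      using G_mono[of "\<lambda>l. norm (a l)" \<gamma> "q^K*\<gamma>"] Gsum[of \<gamma>] g0 r0 r1 by (simp add: G_def)
    have "q^K * \<gamma> * (G (q^K * \<gamma>))^2 * Er (q^K * \<gamma>) \<le> q^K * \<gamma> * (G \<gamma>)^2 * 1"
      using r0 G0[OF r0] Gle Er_le1 Er_pos q0 g0
      by (intro mult_mono power_mono) (auto intro: less_imp_le)
    also have "\<dots> = q^K * (\<gamma> * (G \<gamma>)^2)" by simp
    also have "\<dots> \<le> lam^K * D"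
    proof (rule mult_mono)
      show "q^K \<le> lam^K" using q0 by (intro power_mono) (auto simp: lam_def)
      show "\<gamma> * (G \<gamma>)^2 \<le> D" unfolding D_def using g0 by (intro mult_left_mono) auto
    qed (use g0 lam0 in auto)
    finally show ?thesis using True by (simp add: qk K_def mult.commute mult.left_commute)
  next
    case False
    define K where "K = nat (-k)"
    have qk: "q powi k * \<gamma> = \<gamma> / q^K" using False by (simp add: K_def power_int_def inverse_eq_divide power_one_over)
    have Gb: "(\<Sum>l. norm (a l) * (\<gamma>/q^K)^l) \<le> C * (s*\<gamma>)^K / q powr (real K ^ 2 / 2) * M * W"
      using G_neg[OF q0 q1 s0 g0 _ _ ab th, of K] Cpos unfolding W_def by auto
    have X: "G (\<gamma>/q^K) \<le> (C*M*W) * (s*\<gamma>)^K / q powr (real K ^ 2 / 2)"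
      using Gb by (simp add: G_def field_simps)
    have "\<gamma>/q^K * (G (\<gamma>/q^K))^2 * Er (\<gamma>/q^K) \<le> \<gamma> * (C*M*W)^2 * (s^2)^K"
    proof (rule final_num[OF q0 s0 g0 _ X])
      show "0 \<le> G (\<gamma>/q^K)" using q0 g0 by (intro G0) simp
      show "0 \<le> Er (\<gamma>/q^K)" using Er_pos less_imp_le by blast
      show "Er (\<gamma>/q^K) \<le> q^(K^2) * q^K / \<gamma>^(2*K)" unfolding Er_def by (rule Er_bound[OF q0 q1 g0])
    qed
    also have "\<dots> \<le> D * lam ^ K"
    proof (rule mult_mono)
      show "(s^2)^K \<le> lam^K" using s0 by (intro power_mono) (auto simp: lam_def)
      show "\<gamma> * (C*M*W)^2 \<le> D" unfolding D_def using g0 by (intro mult_left_mono) auto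
    qed (use g0 lam0 D0 in auto)
    finally show ?thesis unfolding qk K_def using False by simp
  qed

  define A where "A = (UNIV :: int set) \<times> {1, -1::real}"
  define tt where "tt p = q powi (fst p) * \<gamma>" for p :: "int \<times> real"
  define xr where "xr p = snd p * q powi (fst p) * \<gamma>" for p :: "int \<times> real"
  define c where "c l = cnj (a l) * ((1 + (-1)^l) / 2)" for l :: nat
  define T where "T p = qint_term q \<gamma> F p" for p
  have Tq: "T p = of_real (tt p) * F (of_real (xr p))" for p
    by (cases p) (simp add: T_def qint_term_def tt_def xr_def)
  have tt0: "0 < tt p" for p using q0 g0 by (simp add: tt_def)
  have xr_abs: "xr p = tt p \<or> xr p = - tt p" if "p \<in> A" for p
    using that by (auto simp: A_def xr_def tt_def)
  have nx: "norm (complex_of_real (xr p)) = tt p" if "p \<in> A" for p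
    using xr_abs[OF that] tt0[of p] by auto
  have ErA: "Er (xr p) = Er (tt p)" if "p \<in> A" for p
    using xr_abs[OF that] Er_minus by auto
  have normF: "norm (F (of_real (xr p))) \<le> G (tt p) * Er (tt p)" if "p \<in> A" for p
  proof -
    have "norm (F (of_real (xr p))) = norm (f (of_real (xr p))) * Er (tt p)"
      using Feq[of "xr p"] ErA[OF that] Er_pos[of "tt p"] by (simp add: norm_mult)
    also have "\<dots> \<le> G (tt p) * Er (tt p)"
      using fnorm[of "of_real (xr p)"] nx[OF that] Er_pos[of "tt p"] by (intro mult_right_mono) auto
    finally show ?thesis .
  qed
  define B where "B p l = tt p * norm (F (of_real (xr p))) * (norm (a l) * tt p ^ l)" for p l
  define H where "H p = tt p * norm (F (of_real (xr p))) * G (tt p)" for p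
  define U where "U = (\<lambda>(k::int, e::real). D * lam ^ nat \<bar>k\<bar>)"
  have Usum: "U summable_on A"
    unfolding U_def A_def
    by (rule summable_times_pm[OF summable_on_cmult_right[OF geo_int[OF lam0 lam1]]]) (use D0 lam0 in auto)
  have Hsum: "H summable_on A"
  proof (rule summable_on_comparison_test[OF Usum])
    fix p assume pA: "p \<in> A"
    have G0': "0 \<le> G (tt p)" using G0 tt0 less_imp_le by blast
    show "0 \<le> H p" unfolding H_def using tt0[of p] G0' by simp
    have "H p \<le> tt p * (G (tt p) * Er (tt p)) * G (tt p)"
      unfolding H_def using normF[OF pA] tt0[of p] G0' by (intro mult_right_mono mult_left_mono) auto
    also have "\<dots> = tt p * (G (tt p))^2 * Er (tt p)" by (simp add: power2_eq_square)
    also have "\<dots> \<le> U p" using kb[of "fst p"] by (cases p) (simp add: U_def tt_def)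
    finally show "H p \<le> U p" .
  qed
  have Bsum: "(\<lambda>(p,l). B p l) summable_on (Sigma A (\<lambda>_. UNIV :: nat set))"
  proof (rule summable_on_SigmaI[where g = H])
    fix p assume pA: "p \<in> A"
    have "(\<lambda>l. norm (a l) * tt p ^ l) sums G (tt p)"
      unfolding G_def using Gsum[of "tt p"] tt0[of p] by (intro summable_sums) simp
    then have "(\<lambda>l. tt p * norm (F (of_real (xr p))) * (norm (a l) * tt p ^ l)) sums H p"
      unfolding H_def by (rule sums_mult)
    then show "((\<lambda>l. (\<lambda>(p,l). B p l) (p, l)) has_sum H p) UNIV"
      unfolding B_def using tt0[of p] by (intro sums_nonneg_imp_has_sum) (auto intro: less_imp_le)
  next
    show "H summable_on A" by (rule Hsum)
  next
    fix p l show "0 \<le> (\<lambda>(p,l). B p l) (p, l)" unfolding B_def using tt0[of p] by (simp add: less_imp_le)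
  qed
  define Z where "Z p l = T p * (c l * of_real (xr p) ^ l)" for p l
  have nc: "norm (c l) \<le> norm (a l)" for l
  proof (cases "even l")
    case True then show ?thesis by (simp add: c_def)
  next
    case False then show ?thesis by (simp add: c_def)
  qed
  have Zsum: "(\<lambda>(p,l). Z p l) summable_on (Sigma A (\<lambda>_. UNIV :: nat set))"
    unfolding summable_on_iff_abs_summable_on_complex
  proof (rule summable_on_comparison_test[OF Bsum])
    fix x assume "x \<in> Sigma A (\<lambda>_. UNIV :: nat set)"
    then obtain p l where x: "x = (p, l)" and pA: "p \<in> A" by auto
    have "norm (Z p l) = tt p * norm (F (of_real (xr p))) * (norm (c l) * tt p ^ l)"
      unfolding Z_def Tq using nx[OF pA] tt0[of p] by (simp add: norm_mult norm_power)
    also have "\<dots> \<le> B p l"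
      unfolding B_def using nc[of l] tt0[of p] by (intro mult_left_mono mult_right_mono) auto
    finally show "norm ((\<lambda>(p,l). Z p l) x) \<le> (\<lambda>(p,l). B p l) x" by (simp add: x)
  qed simp

  have cser: "((\<lambda>l. c l * of_real x ^ l) has_sum cnj (f (of_real x))) UNIV" for x :: real
  proof -
    have s1: "(\<lambda>l. a l * of_real y ^ l) sums f (of_real y)" for y :: real
      unfolding f_def by (rule summable_sums[OF summable_norm_cancel[OF fsum]])
    have c1: "(\<lambda>l. cnj (a l * of_real y ^ l)) sums cnj (f (of_real y))" for y :: real
      using s1[of y] by (simp only: sums_cnj)
    have "(\<lambda>l. (cnj (a l * of_real x ^ l) + cnj (a l * of_real (-x) ^ l)) / 2) sums
          ((cnj (f (of_real x)) + cnj (f (of_real (-x)))) / 2)"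
      by (intro sums_divide sums_add c1)
    moreover have "(cnj (a l * of_real x ^ l) + cnj (a l * of_real (-x) ^ l)) / 2 = c l * of_real x ^ l" for l
    proof (cases "even l")
      case True
      then have "of_real (-x) ^ l = (of_real x ^ l :: complex)" by simp
      then show ?thesis using True by (simp add: c_def)
    next
      case False
      then have "of_real (-x) ^ l = - (of_real x ^ l :: complex)" by simp
      then show ?thesis using False by (simp add: c_def)
    qed
    ultimately have "(\<lambda>l. c l * of_real x ^ l) sums cnj (f (of_real x))"
      using feven[of x] by simp
    moreover have "summable (\<lambda>l. norm (c l * of_real x ^ l))"
    proof (rule summable_comparison_test'[OF fsum[of "of_real x"]])
      fix l :: nat assume "l \<ge> 0"
      show "norm (norm (c l * of_real x ^ l)) \<le> norm (a l * of_real x ^ l)"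
        using nc[of l] by (simp add: norm_mult norm_power mult_right_mono)
    qed
    ultimately show ?thesis by (intro norm_summable_imp_has_sum)
  qed
  have LHS: "infsum (\<lambda>p. infsum (\<lambda>l. Z p l) UNIV) A = infsum (\<lambda>p. T p * cnj (f (of_real (xr p)))) A"
    by (rule infsum_cong) (simp add: Z_def infsum_cmult_right' infsumI[OF cser])
  have hyp0: "infsum (\<lambda>p. qint_term q \<gamma> (\<lambda>x. F x * x ^ (2 * n)) p) A = 0" for n
    using assms(8) q1 unfolding qint_def A_def by auto
  have RHS: "infsum (\<lambda>l. infsum (\<lambda>p. Z p l) A) UNIV = 0"
  proof -
    have "infsum (\<lambda>p. Z p l) A = 0" for l
    proof (cases "even l")
      case True
      then obtain n where l: "l = 2 * n" by auto
      have "infsum (\<lambda>p. Z p l) A = c l * infsum (\<lambda>p. qint_term q \<gamma> (\<lambda>x. F x * x ^ (2 * n)) p) A"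
      proof -
        have "Z p l = c l * qint_term q \<gamma> (\<lambda>x. F x * x ^ (2 * n)) p" for p
          by (cases p) (simp add: Z_def T_def qint_term_def xr_def l)
        then show ?thesis by (simp add: infsum_cmult_right')
      qed
      then show ?thesis using hyp0[of n] by simp
    next
      case False
      then show ?thesis by (simp add: Z_def c_def)
    qed
    then show ?thesis by simp
  qed
  have swap: "infsum (\<lambda>p. infsum (\<lambda>l. Z p l) UNIV) A = infsum (\<lambda>l. infsum (\<lambda>p. Z p l) A) UNIV"
    by (rule infsum_swap_banach) (use Zsum in simp)
  have S0: "infsum (\<lambda>p. T p * cnj (f (of_real (xr p)))) A = 0"
    using LHS swap RHS by simp
  have Ssum: "(\<lambda>p. T p * cnj (f (of_real (xr p)))) summable_on A"
  proof -
    have "(\<lambda>p. infsum (\<lambda>l. Z p l) UNIV) summable_on A"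
      using summable_on_Sigma_banach[OF Zsum] by simp
    moreover have "infsum (\<lambda>l. Z p l) UNIV = T p * cnj (f (of_real (xr p)))" for p
      by (simp add: Z_def infsum_cmult_right' infsumI[OF cser])
    ultimately show ?thesis by simp
  qed
  have Tval: "T p * cnj (f (of_real (xr p))) = of_real (tt p * Er (xr p) * (norm (f (of_real (xr p))))^2)" for p
  proof -
    have "T p * cnj (f (of_real (xr p))) = of_real (tt p) * of_real (Er (xr p)) * (f (of_real (xr p)) * cnj (f (of_real (xr p))))"
      unfolding Tq Feq by (simp add: algebra_simps)
    also have "\<dots> = of_real (tt p * Er (xr p) * (norm (f (of_real (xr p))))^2)"
      by (simp flip: complex_norm_square)
    finally show ?thesis .
  qed
  have fzero: "f (of_real (q^k * \<gamma>)) = 0" for k :: nat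
  proof -
    have pA: "(int k, 1) \<in> A" by (simp add: A_def)
    have "T (int k, 1) * cnj (f (of_real (xr (int k, 1)))) = 0"
    proof (rule nonneg_infsum_le_0D_complex[OF _ Ssum _ pA])
      show "infsum (\<lambda>p. T p * cnj (f (of_real (xr p)))) A \<le> 0" using S0 by simp
      fix p assume "p \<in> A"
      show "0 \<le> T p * cnj (f (of_real (xr p)))"
        unfolding Tval using tt0[of p] Er_pos[of "xr p"] by (simp add: less_eq_complex_def)
    qed
    then have "tt (int k, 1) * Er (xr (int k, 1)) * (norm (f (of_real (xr (int k, 1)))))^2 = 0"
      unfolding Tval by (simp only: of_real_eq_0_iff)
    then show ?thesis using tt0[of "(int k, 1)"] Er_pos[of "xr (int k, 1)"] by (simp add: xr_def)
  qed

  have fhol: "f holomorphic_on UNIV"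
  proof -
    have "(f has_field_derivative (\<Sum>n. diffs a n * x^n)) (at x)" for x
      unfolding f_def by (rule termdiffs_strong_converges_everywhere) (rule summable_norm_cancel[OF fsum])
    then show ?thesis
      unfolding holomorphic_on_def using field_differentiable_at_within field_differentiable_def by blast
  qed
  have lim: "0 islimpt range (\<lambda>k::nat. complex_of_real (q^k * \<gamma>))"
    unfolding islimpt_sequential
  proof (intro exI conjI allI)
    fix n :: nat
    show "complex_of_real (q^n * \<gamma>) \<in> range (\<lambda>k::nat. complex_of_real (q^k * \<gamma>)) - {0}"
      using q0 g0 by auto
  next
    have "(\<lambda>k. q^k * \<gamma>) \<longlonglongrightarrow> 0"
      using q0 q1 by (intro tendsto_mult_left_zero LIMSEQ_power_zero) auto
    then show "(\<lambda>k. complex_of_real (q^k * \<gamma>)) \<longlonglongrightarrow> 0"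
      using tendsto_of_real by fastforce
  qed
  have fz: "f w = 0" for w
    by (rule analytic_continuation[OF fhol open_UNIV connected_UNIV subset_UNIV UNIV_I lim])
       (use fzero in auto)
  show ?thesis
  proof (intro allI impI)
    fix x :: complex assume "\<bar>Im x\<bar> < 1"
    then show "F x = 0" using Frep[of x] fz[of x] by (simp add: f_def)
  qed
qed

end
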